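(* Let $b\ge2$ and $d\in\{0,\dots,b-1\}$. If $d\ne0$, the sequence $(H^{(k)})_{k\ge1}$ is strictly decreasing; if $d=0$, the sequence $(H^{(k)})_{k\ge0}$ is strictly decreasing. In both cases $\lim_{k\to\infty}H^{(k)}=b\log b$.
   Context: For an integer $n\ge0$, its (minimal) base-$b$ representation is the string of base-$b$ digits of $n$ without leading zeros (the empty string for $n=0$); $k(n)$ denotes the number of occurrences of the digit $d$ in this representation. For $k\ge0$, the Irwin sum is $H^{(k)}=\sum_{n\ge1,\ k(n)=k}1/n$. *)

theory Defs
  imports "HOL-Analysis.Analysis"
begin

text \<open>Number of occurrences of digit d in the minimal base-b representation of n
  (no leading zeros; the representation of 0 is empty).\<close>
fun digit_count :: "nat \<Rightarrow> nat \<Rightarrow> nat \<Rightarrow> nat" where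
  "digit_count b d n =
     (if n = 0 \<or> b < 2 then 0
      else (if n mod b = d then 1 else 0) + digit_count b d (n div b))"

definition irwin_sum :: "nat \<Rightarrow> nat \<Rightarrow> nat \<Rightarrow> real" where
  "irwin_sum b d k = infsum (\<lambda>n. 1 / real n) {n. n \<ge> 1 \<and> digit_count b d n = k}"

end

theory Submission
  imports Defs "HOL-Analysis.Analysis"
begin


declare digit_count.simps[simp del]

definition psi :: "nat \<Rightarrow> real" where "psi n = ln (real n + 1) - ln (real n)"

lemma psi_bounds: assumes "n \<ge> 1" shows "1/(real n + 1) \<le> psi n" "psi n \<le> 1 / real n"
proof -
  have n: "real n > 0" using assms by simp
  have "ln (real n / (real n + 1)) \<le> real n / (real n + 1) - 1" using n by (intro ln_le_minus_one) auto
  moreover have "ln (real n / (real n + 1)) = ln (real n) - ln (real n + 1)" using n by (simp add: ln_div)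
  moreover have "real n / (real n + 1) - 1 = - (1/(real n + 1))" using n by (simp add: field_simps)
  ultimately show "1/(real n + 1) \<le> psi n" unfolding psi_def by linarith
  have "ln ((real n + 1) / real n) \<le> (real n + 1) / real n - 1" using n by (intro ln_le_minus_one) auto
  moreover have "ln ((real n + 1) / real n) = ln (real n + 1) - ln (real n)" using n by (simp add: ln_div)
  moreover have "(real n + 1) / real n - 1 = 1 / real n" using n by (simp add: field_simps)
  ultimately show "psi n \<le> 1 / real n" unfolding psi_def by linarith
qed

lemma psi_nonneg: "psi n \<ge> 0"
proof (cases "n = 0")
  case True thus ?thesis by (simp add: psi_def)
next
  case False
  hence "1/(real n + 1) \<le> psi n" using psi_bounds(1)[of n] by simp
  moreover have "0 \<le> 1/(real n + 1)" by simp
  ultimately show ?thesis by linarith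
qed

lemma psi_telescope: assumes "m \<ge> 1" "b \<ge> 1" shows "(\<Sum>j<b. psi (b*m+j)) = psi m"
proof -
  let ?f = "\<lambda>i::nat. ln (real (b*m+i))"
  have "(\<Sum>j<b. psi (b*m+j)) = (\<Sum>j<b. ?f (Suc j) - ?f j)"
    by (intro sum.cong) (auto simp: psi_def add.commute add.left_commute)
  also have "\<dots> = ?f b - ?f 0" by (rule sum_lessThan_telescope)
  also have "?f b = ln (real b) + ln (real m + 1)"
  proof -
    have "real (b*m+b) = real b * (real m + 1)" by (simp add: algebra_simps)
    thus ?thesis using assms by (simp add: ln_mult)
  qed
  also have "?f 0 = ln (real b) + ln (real m)" using assms by (simp add: ln_mult)
  finally show ?thesis by (simp add: psi_def)
qed

lemma psi_sum_digits: "(\<Sum>j<b. psi j) = ln (real b)"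
proof -
  have "(\<Sum>j<b. psi j) = (\<Sum>j<b. ln (real (Suc j)) - ln (real j))"
    by (intro sum.cong) (auto simp: psi_def add.commute)
  also have "\<dots> = ln (real b) - ln (real 0)" by (rule sum_lessThan_telescope)
  finally show ?thesis by simp
qed

lemma dc_zero: "digit_count b d 0 = 0"
  by (subst digit_count.simps) simp

lemma dc_step: assumes "b \<ge> 2" "n \<ge> 1" "j < b"
  shows "digit_count b d (b*n+j) = digit_count b d n + (if j = d then 1 else 0)"
proof -
  have "b*n+j \<noteq> 0" using assms by auto
  moreover have "(b*n+j) mod b = j" using assms by simp
  moreover have "(b*n+j) div b = n" using assms by simp
  ultimately show ?thesis using assms by (subst digit_count.simps) auto
qed

lemma dc_small: assumes "b \<ge> 2" "1 \<le> n" "n < b"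
  shows "digit_count b d n = (if n = d then 1 else 0)"
  using assms by (subst digit_count.simps) (auto simp: dc_zero)

lemma dc_bound: assumes "b \<ge> 2" shows "n < b^j \<Longrightarrow> digit_count b d n \<le> j"
proof (induction j arbitrary: n)
  case 0 thus ?case by (simp add: dc_zero)
next
  case (Suc j)
  show ?case
  proof (cases "n = 0")
    case True thus ?thesis by (simp add: dc_zero)
  next
    case False
    have "n div b < b^j" using Suc.prems assms
      by (metis div_less_iff_less_mult mult.commute not_numeral_le_zero power_Suc gr0I)
    hence "digit_count b d (n div b) \<le> j" by (rule Suc.IH)
    thus ?thesis using False assms by (subst digit_count.simps) auto
  qed
qed

lemma dc_large: assumes "b \<ge> 2" "digit_count b d n = k" "k \<ge> 1" shows "b^(k-1) \<le> n"
proof (rule ccontr)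
  assume "\<not> b^(k-1) \<le> n"
  hence "digit_count b d n \<le> k - 1" using dc_bound[OF assms(1)] by simp
  thus False using assms by simp
qed

lemma dc_exists: assumes "b \<ge> 2" "d < b" "k \<ge> 1" shows "\<exists>m\<ge>1. digit_count b d m = k"
  using assms(3)
proof (induction k rule: dec_induct)
  case base
  show ?case
  proof (cases "d = 0")
    case True
    have "digit_count b d (b*1+0) = 1" using dc_step[OF assms(1), of 1 0 d] dc_small[OF assms(1), of 1 d] True assms
      by simp
    thus ?thesis by (intro exI[of _ "b*1+0"]) (use assms in auto)
  next
    case False
    thus ?thesis using dc_small[OF assms(1), of d d] assms by (intro exI[of _ d]) auto
  qed
next
  case (step k)
  then obtain m where "m \<ge> 1" "digit_count b d m = k" by blast
  moreover have "b*m+d \<ge> 1" using \<open>m \<ge> 1\<close> assms(1) by (simp add: Suc_le_eq)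
  ultimately show ?case using dc_step[OF assms(1), of m d d] assms by (intro exI[of _ "b*m+d"]) auto
qed

lemma sum_add_split: "(\<Sum>n<(a::nat)+c. g n) = (\<Sum>n<a. g n) + (\<Sum>j<c. g (a+j))"
  by (induction c) (simp_all add: ac_simps)

lemma sum_reindex_mult: "(\<Sum>n<(b::nat)*N. g n) = (\<Sum>m<N. \<Sum>j<b. g (b*m+j))"
proof (induction N)
  case 0 thus ?case by simp
next
  case (Suc N)
  have "b * Suc N = b*N + b" by simp
  thus ?case using Suc by (simp only: sum_add_split sum.lessThan_Suc)
qed




definition FF :: "nat \<Rightarrow> nat \<Rightarrow> nat \<Rightarrow> nat \<Rightarrow> real" where
  "FF b d k n = (if 1 \<le> n \<and> digit_count b d n = k then 1 / real n else 0)"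
definition PH :: "nat \<Rightarrow> nat \<Rightarrow> nat \<Rightarrow> nat \<Rightarrow> real" where
  "PH b d k n = (if 1 \<le> n \<and> digit_count b d n = k then psi (b*n+d) else 0)"
definition GG :: "nat \<Rightarrow> nat \<Rightarrow> nat \<Rightarrow> nat \<Rightarrow> real" where
  "GG b d k n = (if 1 \<le> n \<and> digit_count b d n \<le> k then psi n else 0)"

context
  fixes b d :: nat
  assumes b2: "b \<ge> 2" and db: "d < b"
begin

lemma GG_nonneg: "GG b d k n \<ge> 0" by (simp add: GG_def psi_nonneg)
lemma PH_nonneg: "PH b d k n \<ge> 0" by (simp add: PH_def psi_nonneg)
lemma FF_nonneg: "FF b d k n \<ge> 0" by (simp add: FF_def)

lemma GG_block: "(\<Sum>j<b. GG b d k (b*m+j)) = (if m = 0 then (\<Sum>j<b. GG b d k j) else GG b d k m - PH b d k m)"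
proof (cases "m = 0")
  case True thus ?thesis by simp
next
  case False
  hence m: "m \<ge> 1" by simp
  have e: "GG b d k (b*m+j) = (if digit_count b d m + (if j = d then 1 else 0) \<le> k then psi (b*m+j) else 0)"
    if "j < b" for j
  proof -
    have "1 \<le> b*m+j" using m b2 by (simp add: Suc_le_eq)
    thus ?thesis using dc_step[OF b2 m that, of d] by (simp add: GG_def)
  qed
  consider "digit_count b d m < k" | "digit_count b d m = k" | "digit_count b d m > k" by linarith
  thus ?thesis
  proof cases
    case 1
    have "(\<Sum>j<b. GG b d k (b*m+j)) = (\<Sum>j<b. psi (b*m+j))"
      by (intro sum.cong) (use 1 e in auto)
    also have "\<dots> = psi m" using psi_telescope[OF m, of b] b2 by simp
    finally show ?thesis using 1 m False by (simp add: GG_def PH_def)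
  next
    case 2
    have "(\<Sum>j<b. GG b d k (b*m+j)) = (\<Sum>j<b. psi (b*m+j) - (if j = d then psi (b*m+d) else 0))"
      by (intro sum.cong) (use 2 e in auto)
    also have "\<dots> = psi m - psi (b*m+d)"
      using psi_telescope[OF m, of b] b2 db by (simp add: sum_subtractf)
    finally show ?thesis using 2 m False by (simp add: GG_def PH_def)
  next
    case 3
    have "(\<Sum>j<b. GG b d k (b*m+j)) = (\<Sum>j<b. 0)"
      by (intro sum.cong) (use 3 e in auto)
    thus ?thesis using 3 m False by (simp add: GG_def PH_def)
  qed
qed

lemma PH_partial:
  assumes "N \<ge> 1"
  shows "(\<Sum>m<N. PH b d k m) = (\<Sum>j<b. GG b d k j) + (\<Sum>n<N. GG b d k n) - (\<Sum>n<b*N. GG b d k n)"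
proof -
  have "(\<Sum>n<b*N. GG b d k n) = (\<Sum>m<N. (if m = 0 then (\<Sum>j<b. GG b d k j) else GG b d k m - PH b d k m))"
    by (simp only: sum_reindex_mult GG_block)
  also have "\<dots> = (\<Sum>m<N. (GG b d k m - PH b d k m) + (if m = 0 then (\<Sum>j<b. GG b d k j) else 0))"
    by (intro sum.cong) (auto simp: GG_def PH_def)
  also have "\<dots> = (\<Sum>m<N. GG b d k m) - (\<Sum>m<N. PH b d k m) + (\<Sum>j<b. GG b d k j)"
    using assms by (simp add: sum.distrib sum_subtractf)
  finally show ?thesis by simp
qed

lemma PH_summable: "summable (PH b d k)"
proof (rule bounded_imp_summable[where B = "\<Sum>j<b. GG b d k j"])
  show "0 \<le> PH b d k n" for n by (rule PH_nonneg)
  fix n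
  have "(\<Sum>m\<le>n. PH b d k m) = (\<Sum>m<Suc n. PH b d k m)" by (simp add: lessThan_Suc_atMost)
  also have "\<dots> = (\<Sum>j<b. GG b d k j) + (\<Sum>m<Suc n. GG b d k m) - (\<Sum>m<b*Suc n. GG b d k m)"
    by (rule PH_partial) simp
  also have "(\<Sum>m<Suc n. GG b d k m) \<le> (\<Sum>m<b*Suc n. GG b d k m)"
    using b2 mult_le_mono1[of 1 b "Suc n"] by (intro sum_mono2) (auto simp: GG_nonneg)
  finally show "(\<Sum>m\<le>n. PH b d k m) \<le> (\<Sum>j<b. GG b d k j)" by simp
qed

definition RH where "RH k n = FF b d k n - real b * PH b d k n"

lemma RH_bounds: "0 \<le> RH k n" "RH k n \<le> (if n \<ge> 1 \<and> digit_count b d n = k then 1 / (real n)^2 else 0)"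
proof -
  have "0 \<le> RH k n \<and> RH k n \<le> (if n \<ge> 1 \<and> digit_count b d n = k then 1 / (real n)^2 else 0)"
  proof (cases "n \<ge> 1 \<and> digit_count b d n = k")
    case False thus ?thesis by (auto simp: RH_def FF_def PH_def)
  next
    case True
    hence n: "n \<ge> 1" by simp
    have r: "b*n+d \<ge> 1" using n b2 by (simp add: Suc_le_eq)
    have p1: "1/(real (b*n+d) + 1) \<le> psi (b*n+d)" and p2: "psi (b*n+d) \<le> 1/real (b*n+d)"
      using psi_bounds[OF r] by auto
    have rn: "real n > 0" using n by simp
    have bb: "real b \<ge> 2" using b2 by simp
    have dd: "real d + 1 \<le> real b" using db by linarith
    have RHe: "RH k n = 1 / real n - real b * psi (b*n+d)" using True by (simp add: RH_def FF_def PH_def)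
    have "real b * psi (b*n+d) \<le> real b / real (b*n+d)" using p2 bb
      by (metis mult_left_mono times_divide_eq_right mult.right_neutral less_le_trans zero_less_numeral less_imp_le)
    also have "real b / real (b*n+d) \<le> real b / (real b * real n)"
    proof (rule divide_left_mono)
      have "0 < real b * real n" using rn bb by simp
      moreover have "0 < real b * real n + real d" using rn bb by (simp add: add_pos_nonneg)
      ultimately show "0 < real (b*n+d) * (real b * real n)" by simp
    qed (use rn bb in auto)
    also have "\<dots> = 1 / real n" using bb by simp
    finally have A: "0 \<le> RH k n" using RHe by simp
    have "real b / (real (b*n+d) + 1) \<le> real b * psi (b*n+d)" using p1 bb
      by (metis mult_left_mono times_divide_eq_right mult.right_neutral less_le_trans zero_less_numeral less_imp_le)
    moreover have "1 / real n - real b / (real (b*n+d) + 1) \<le> 1 / (real n)^2"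
    proof -
      have "1 / real n - real b / (real (b*n+d) + 1) = (real d + 1) / (real n * (real b * real n + real d + 1))"
      proof -
        have q0: "0 \<le> real b * real n" by simp
        have q: "real b * real n + real d + 1 \<noteq> 0" using q0 of_nat_0_le_iff[of d] by linarith
        have q2: "real n \<noteq> 0" using rn by simp
        show ?thesis using q q2 by (simp add: field_simps)
      qed
      also have "\<dots> \<le> (real d + 1) / (real n * ((real d + 1) * real n))"
      proof (rule divide_left_mono)
        have "(real d + 1) * real n \<le> real b * real n" using dd rn by (intro mult_right_mono) auto
        hence "(real d + 1) * real n \<le> real b * real n + real d + 1" by linarith
        thus "real n * ((real d + 1) * real n) \<le> real n * (real b * real n + real d + 1)"
          using rn by (intro mult_left_mono) auto
        have "0 < real n * ((real d + 1) * real n)" using rn by simp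
        moreover have "0 < real n * (real b * real n + real d + 1)" using rn
          by (intro mult_pos_pos) (auto simp: add_pos_nonneg add_nonneg_pos)
        ultimately show "0 < real n * (real b * real n + real d + 1) * (real n * ((real d + 1) * real n))"
          by simp
      qed simp
      also have "\<dots> = 1 / (real n)^2" using rn by (simp add: power2_eq_square)
      finally show ?thesis .
    qed
    ultimately have "RH k n \<le> 1 / (real n)^2" using RHe by linarith
    thus ?thesis using A True by simp
  qed
  thus "0 \<le> RH k n" "RH k n \<le> (if n \<ge> 1 \<and> digit_count b d n = k then 1 / (real n)^2 else 0)" by auto
qed

end



lemma suminf_strict_less:
  fixes f g :: "nat \<Rightarrow> real"
  assumes "summable f" "summable g" "\<And>n. f n \<le> g n" "f i < g i"
  shows "suminf f < suminf g"
proof -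
  have "0 < suminf (\<lambda>n. g n - f n)"
    by (rule suminf_pos2[of _ i]) (use assms in \<open>auto intro: summable_diff\<close>)
  also have "suminf (\<lambda>n. g n - f n) = suminf g - suminf f" using suminf_diff[OF assms(2) assms(1)] by simp
  finally show ?thesis by simp
qed

context
  fixes b d :: nat
  assumes b2: "b \<ge> 2" and db: "d < b"
begin

lemma RH_summable: "summable (RH b d k)"
proof (rule summable_comparison_test'[where g = "\<lambda>n. inverse (real n ^ 2)" and N = 0])
  show "summable (\<lambda>n. inverse (real n ^ 2))" by (rule inverse_power_summable) simp
  fix n
  have "0 \<le> RH b d k n" "RH b d k n \<le> (if n \<ge> 1 \<and> digit_count b d n = k then 1 / (real n)^2 else 0)"
    using RH_bounds[OF b2 db] by auto
  thus "norm (RH b d k n) \<le> inverse (real n ^ 2)"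
    by (auto simp: divide_inverse split: if_splits)
qed

lemma FF_split: "FF b d k n = real b * PH b d k n + RH b d k n"
  by (simp add: RH_def[OF b2 db])

lemma FF_summable: "summable (FF b d k)"
proof -
  have "summable (\<lambda>n. real b * PH b d k n + RH b d k n)"
    by (intro summable_add summable_mult PH_summable[OF b2 db] RH_summable)
  moreover have "FF b d k = (\<lambda>n. real b * PH b d k n + RH b d k n)" by (rule ext) (rule FF_split)
  ultimately show ?thesis by simp
qed

end



context
  fixes b d :: nat
  assumes b2: "b \<ge> 2" and db: "d < b"
begin

lemma GG_summable: "summable (GG b d K)"
proof (rule summable_comparison_test'[where g = "\<lambda>n. \<Sum>k\<le>K. FF b d k n" and N = 0])
  show "summable (\<lambda>n. \<Sum>k\<le>K. FF b d k n)" by (intro summable_sum FF_summable[OF b2 db])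
  fix n
  show "norm (GG b d K n) \<le> (\<Sum>k\<le>K. FF b d k n)"
  proof (cases "1 \<le> n \<and> digit_count b d n \<le> K")
    case False
    have "GG b d K n = 0" unfolding GG_def by (rule if_not_P[OF False])
    thus ?thesis by (simp add: sum_nonneg FF_nonneg[OF b2 db])
  next
    case True
    have "norm (GG b d K n) = psi n" using True by (simp add: GG_def psi_nonneg)
    also have "\<dots> \<le> 1 / real n" using psi_bounds True by auto
    also have "\<dots> = FF b d (digit_count b d n) n" using True by (simp add: FF_def)
    also have "\<dots> \<le> (\<Sum>k\<le>K. FF b d k n)"
      by (rule member_le_sum) (use True in \<open>auto simp: FF_nonneg[OF b2 db]\<close>)
    finally show ?thesis .
  qed
qed

lemma PH_suminf: "suminf (PH b d k) = (\<Sum>j<b. GG b d k j)"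
proof -
  let ?G0 = "\<Sum>j<b. GG b d k j"
  let ?U = "\<lambda>N. \<Sum>n<N. GG b d k n"
  have U: "?U \<longlonglongrightarrow> suminf (GG b d k)" by (rule summable_LIMSEQ) (rule GG_summable)
  have sm: "strict_mono (\<lambda>N::nat. b*N)" using b2 by (intro strict_monoI) simp
  have U2: "(\<lambda>N. ?U (b*N)) \<longlonglongrightarrow> suminf (GG b d k)"
    using LIMSEQ_subseq_LIMSEQ[OF U sm] by (simp add: o_def)
  have "(\<lambda>N. ?G0 + ?U N - ?U (b*N)) \<longlonglongrightarrow> ?G0 + suminf (GG b d k) - suminf (GG b d k)"
    by (intro tendsto_intros U U2)
  hence lim1: "(\<lambda>N. ?G0 + ?U N - ?U (b*N)) \<longlonglongrightarrow> ?G0" by simp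
  have ev: "eventually (\<lambda>N. ?G0 + ?U N - ?U (b*N) = (\<Sum>m<N. PH b d k m)) sequentially"
    using eventually_ge_at_top[of "1::nat"]
    by eventually_elim (simp add: PH_partial[OF b2 db])
  have "(\<lambda>N. \<Sum>m<N. PH b d k m) \<longlonglongrightarrow> ?G0" by (rule Lim_transform_eventually[OF lim1 ev])
  moreover have "(\<lambda>N. \<Sum>m<N. PH b d k m) \<longlonglongrightarrow> suminf (PH b d k)"
    by (rule summable_LIMSEQ) (rule PH_summable[OF b2 db])
  ultimately show ?thesis using LIMSEQ_unique by blast
qed

lemma G0_ln: assumes "k \<ge> 1" shows "(\<Sum>j<b. GG b d k j) = ln (real b)"
proof -
  have "(\<Sum>j<b. GG b d k j) = (\<Sum>j<b. psi j)"
  proof (intro sum.cong refl)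
    fix j assume j: "j \<in> {..<b}"
    show "GG b d k j = psi j"
    proof (cases "j = 0")
      case True thus ?thesis by (simp add: GG_def psi_def)
    next
      case False
      hence "digit_count b d j \<le> k" using dc_small[OF b2, of j d] j assms by auto
      thus ?thesis using False by (simp add: GG_def)
    qed
  qed
  also have "\<dots> = ln (real b)" by (rule psi_sum_digits)
  finally show ?thesis .
qed

lemma H_eq: "suminf (FF b d k) = real b * (\<Sum>j<b. GG b d k j) + suminf (RH b d k)"
proof -
  have e: "FF b d k = (\<lambda>n. real b * PH b d k n + RH b d k n)" by (rule ext) (rule FF_split[OF b2 db])
  have "suminf (FF b d k) = (\<Sum>n. real b * PH b d k n + RH b d k n)"
    by (simp only: e)
  also have "\<dots> = (\<Sum>n. real b * PH b d k n) + suminf (RH b d k)"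
    by (intro suminf_add[symmetric] summable_mult PH_summable[OF b2 db] RH_summable[OF b2 db])
  also have "(\<Sum>n. real b * PH b d k n) = real b * suminf (PH b d k)"
    by (intro suminf_mult PH_summable[OF b2 db])
  finally show ?thesis by (simp add: PH_suminf)
qed

lemma RH_le: assumes "k \<ge> 1"
  shows "suminf (RH b d k) \<le> suminf (FF b d k) / real b ^ (k-1)"
proof -
  have P: "real b ^ (k-1) > 0" using b2 by simp
  have pt: "RH b d k n \<le> FF b d k n / real b ^ (k-1)" for n
  proof (cases "1 \<le> n \<and> digit_count b d n = k")
    case False
    have "RH b d k n \<le> 0" using RH_bounds(2)[OF b2 db, of k n] by (simp only: if_not_P[OF False])
    moreover have "FF b d k n = 0" unfolding FF_def by (simp only: if_not_P[OF False])
    ultimately show ?thesis by simp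
  next
    case True
    have rn: "real n > 0" using True by simp
    have bn: "real b ^ (k-1) \<le> real n" using dc_large[OF b2, of d n k] True assms
      by (metis of_nat_le_iff of_nat_power)
    have "RH b d k n \<le> 1 / (real n)^2" using RH_bounds[OF b2 db, of k n] True by simp
    also have "\<dots> = (1 / real n) / real n" by (simp add: power2_eq_square)
    also have "\<dots> \<le> (1 / real n) / real b ^ (k-1)"
      by (rule divide_left_mono) (use rn P bn mult_pos_pos[OF rn P] in auto)
    also have "\<dots> = FF b d k n / real b ^ (k-1)" using True by (simp add: FF_def)
    finally show ?thesis .
  qed
  have "suminf (RH b d k) \<le> (\<Sum>n. FF b d k n / real b ^ (k-1))"
    by (intro suminf_le pt RH_summable[OF b2 db] summable_divide FF_summable[OF b2 db])
  also have "\<dots> = suminf (FF b d k) / real b ^ (k-1)"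
    by (intro suminf_divide FF_summable[OF b2 db])
  finally show ?thesis .
qed

lemma H_limit: "(\<lambda>k. suminf (FF b d k)) \<longlonglongrightarrow> real b * ln (real b)"
proof -
  let ?L = "real b * ln (real b)"
  have L0: "?L \<ge> 0" using b2 by simp
  have bb: "real b > 1" using b2 by simp
  have low: "eventually (\<lambda>k. ?L \<le> suminf (FF b d k)) sequentially"
    using eventually_ge_at_top[of "1::nat"]
  proof eventually_elim
    case (elim k)
    have "0 \<le> suminf (RH b d k)" by (intro suminf_nonneg RH_summable[OF b2 db]) (use RH_bounds[OF b2 db] in auto)
    thus ?case using H_eq[of k] G0_ln[OF elim] by simp
  qed
  have up: "eventually (\<lambda>k. suminf (FF b d k) \<le> ?L + (2 * ?L * real b) * inverse (real b ^ k)) sequentially"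
    using eventually_ge_at_top[of "2::nat"]
  proof eventually_elim
    case (elim k)
    define R where "R = suminf (RH b d k)"
    define P where "P = real b ^ (k-1)"
    have H: "suminf (FF b d k) = ?L + R" using H_eq[of k] G0_ln[of k] elim by (simp add: R_def)
    have R0: "0 \<le> R" unfolding R_def
      by (intro suminf_nonneg RH_summable[OF b2 db]) (use RH_bounds[OF b2 db] in auto)
    have P2: "P \<ge> 2"
    proof -
      have "real b ^ 1 \<le> real b ^ (k-1)" using elim bb by (intro power_increasing) auto
      moreover have "(2::real) \<le> real b ^ 1" using b2 by simp
      ultimately show ?thesis unfolding P_def by linarith
    qed
    have "R \<le> (?L + R) / P" using RH_le[of k] elim H by (simp add: R_def P_def)
    hence "R * P \<le> ?L + R" using P2 by (simp add: pos_le_divide_eq)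
    moreover have "R * 2 \<le> R * P" using R0 P2 by (intro mult_left_mono) auto
    ultimately have "R * P \<le> 2 * ?L" by linarith
    hence "R \<le> 2 * ?L / P" using P2 by (simp add: pos_le_divide_eq)
    also have "2 * ?L / P = (2 * ?L * real b) * inverse (real b ^ k)"
    proof -
      have kk: "k = Suc (k-1)" using elim by simp
      have "real b ^ k = real b ^ Suc (k-1)" by (subst kk) (rule refl)
      hence "real b ^ k = real b * P" unfolding P_def by simp
      thus ?thesis using b2 by (simp add: field_simps)
    qed
    finally show ?case using H by simp
  qed
  have "(\<lambda>k. ?L + (2 * ?L * real b) * inverse (real b ^ k)) \<longlonglongrightarrow> ?L + (2 * ?L * real b) * 0"
    by (intro tendsto_intros LIMSEQ_inverse_realpow_zero bb)
  hence lim: "(\<lambda>k. ?L + (2 * ?L * real b) * inverse (real b ^ k)) \<longlonglongrightarrow> ?L" by simp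
  show ?thesis by (rule tendsto_sandwich[OF low up tendsto_const lim])
qed

end



context
  fixes b d :: nat
  assumes b2: "b \<ge> 2" and db: "d < b"
begin

lemma sum_hole: "(\<Sum>j<b. if j = d then 0 else (c::real)) = (real b - 1) * c"
proof -
  have "(\<Sum>j<b. if j = d then 0 else c) = (\<Sum>j<b. c - (if j = d then c else 0))"
    by (intro sum.cong) auto
  also have "\<dots> = real b * c - c" using db by (simp add: sum_subtractf)
  finally show ?thesis by (simp add: algebra_simps)
qed

lemma H_mono: assumes k: "k \<ge> 1 \<or> d = 0" shows "suminf (FF b d (Suc k)) < suminf (FF b d k)"
proof -
  define \<alpha> where "\<alpha> m = (if 1 \<le> m \<and> digit_count b d m = Suc k then (\<Sum>j<b. if j = d then 0 else 1 / real (b*m+j)) else 0)" for m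
  define \<beta> where "\<beta> m = (if 1 \<le> m \<and> digit_count b d m = k then 1 / real (b*m+d) else 0)" for m
  have bpos: "real b > 0" using b2 by simp
  have blk: "(\<Sum>j<b. FF b d (Suc k) (b*m+j)) = \<alpha> m + \<beta> m" for m
  proof (cases "m = 0")
    case True
    have "FF b d (Suc k) j = 0" if "j < b" for j
    proof (cases "j = 0")
      case True thus ?thesis by (simp add: FF_def)
    next
      case False
      hence "digit_count b d j = (if j = d then 1 else 0)" using dc_small[OF b2, of j d] that by simp
      thus ?thesis using k False by (auto simp: FF_def)
    qed
    thus ?thesis using True by (simp add: \<alpha>_def \<beta>_def)
  next
    case False
    hence m: "m \<ge> 1" by simp
    have e: "FF b d (Suc k) (b*m+j) = (if j = d then 0 else (if digit_count b d m = Suc k then 1 / real (b*m+j) else 0))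
       + (if j = d then (if digit_count b d m = k then 1 / real (b*m+d) else 0) else 0)" if "j < b" for j
    proof -
      have "1 \<le> b*m+j" using m b2 by (simp add: Suc_le_eq)
      thus ?thesis using dc_step[OF b2 m that, of d] by (auto simp: FF_def)
    qed
    have "(\<Sum>j<b. FF b d (Suc k) (b*m+j)) = (\<Sum>j<b. (if j = d then 0 else (if digit_count b d m = Suc k then 1 / real (b*m+j) else 0))
       + (if j = d then (if digit_count b d m = k then 1 / real (b*m+d) else 0) else 0))"
      by (intro sum.cong) (auto simp: e)
    also have "\<dots> = (\<Sum>j<b. (if j = d then 0 else (if digit_count b d m = Suc k then 1 / real (b*m+j) else 0)))
       + (\<Sum>j<b. (if j = d then (if digit_count b d m = k then 1 / real (b*m+d) else 0) else 0))"
      by (rule sum.distrib)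
    also have "(\<Sum>j<b. (if j = d then 0 else (if digit_count b d m = Suc k then 1 / real (b*m+j) else 0))) = \<alpha> m"
      by (cases "digit_count b d m = Suc k") (use m in \<open>auto simp: \<alpha>_def cong: if_cong\<close>)
    also have "(\<Sum>j<b. (if j = d then (if digit_count b d m = k then 1 / real (b*m+d) else 0) else 0)) = \<beta> m"
      using db m by (simp add: \<beta>_def)
    finally show ?thesis .
  qed
  have part: "(\<Sum>n<b*N. FF b d (Suc k) n) = (\<Sum>m<N. \<alpha> m + \<beta> m)" for N
    by (simp only: sum_reindex_mult blk)
  have inv_le: "1 / real (b*m+j) \<le> 1 / (real b * real m)" if "m \<ge> 1" for m j
  proof (rule divide_left_mono)
    have "0 < real b * real m" using that bpos by simp
    moreover have "0 < real (b*m+j)"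
    proof -
      have "0 < b*m + j" using that b2 by simp
      thus ?thesis by (simp only: of_nat_0_less_iff)
    qed
    ultimately show "0 < real (b*m+j) * (real b * real m)" by simp
  qed auto
  have inv_less: "1 / real (b*m+j) < 1 / (real b * real m)" if "m \<ge> 1" "j \<ge> 1" for m j
  proof (rule divide_strict_left_mono)
    have "0 < real b * real m" using that bpos by simp
    moreover have "0 < real (b*m+j)"
    proof -
      have "0 < b*m + j" using that b2 by simp
      thus ?thesis by (simp only: of_nat_0_less_iff)
    qed
    ultimately show "0 < real (b*m+j) * (real b * real m)" by simp
  qed (use that in auto)
  have \<alpha>0: "0 \<le> \<alpha> m" for m by (auto simp: \<alpha>_def intro!: sum_nonneg)
  have \<beta>0: "0 \<le> \<beta> m" for m by (auto simp: \<beta>_def)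
  have \<alpha>le: "\<alpha> m \<le> (real b - 1) / real b * FF b d (Suc k) m" for m
  proof (cases "1 \<le> m \<and> digit_count b d m = Suc k")
    case True
    have "\<alpha> m = (\<Sum>j<b. if j = d then 0 else 1 / real (b*m+j))" using True by (simp add: \<alpha>_def)
    also have "\<dots> \<le> (\<Sum>j<b. if j = d then 0 else 1 / (real b * real m))"
      by (intro sum_mono) (use inv_le True in auto)
    also have "\<dots> = (real b - 1) * (1 / (real b * real m))" by (rule sum_hole)
    also have "\<dots> = (real b - 1) / real b * FF b d (Suc k) m" using True by (simp add: FF_def)
    finally show ?thesis .
  next
    case False thus ?thesis using b2 by (auto simp: \<alpha>_def FF_def)
  qed
  have \<beta>le: "\<beta> m \<le> FF b d k m / real b" for m
  proof (cases "1 \<le> m \<and> digit_count b d m = k")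
    case True
    thus ?thesis using inv_le[of m d] by (simp add: \<beta>_def FF_def mult.commute)
  next
    case False thus ?thesis by (auto simp: \<beta>_def FF_def)
  qed
  have sF1: "summable (FF b d (Suc k))" and sF0: "summable (FF b d k)" using FF_summable[OF b2 db] by auto
  have s\<alpha>': "summable (\<lambda>m. (real b - 1) / real b * FF b d (Suc k) m)" by (intro summable_mult sF1)
  have s\<beta>': "summable (\<lambda>m. FF b d k m / real b)" by (intro summable_divide sF0)
  have s\<alpha>: "summable \<alpha>"
    by (rule summable_comparison_test'[OF s\<alpha>', of 0]) (use \<alpha>0 \<alpha>le in auto)
  have s\<beta>: "summable \<beta>"
    by (rule summable_comparison_test'[OF s\<beta>', of 0]) (use \<beta>0 \<beta>le in auto)
  have sm: "strict_mono (\<lambda>N::nat. b*N)" using b2 by (intro strict_monoI) simp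
  have L1: "(\<lambda>N. \<Sum>n<b*N. FF b d (Suc k) n) \<longlonglongrightarrow> suminf (FF b d (Suc k))"
    using LIMSEQ_subseq_LIMSEQ[OF summable_LIMSEQ[OF sF1] sm] by (simp add: o_def)
  have L2: "(\<lambda>N. \<Sum>m<N. \<alpha> m + \<beta> m) \<longlonglongrightarrow> suminf (\<lambda>m. \<alpha> m + \<beta> m)"
    by (intro summable_LIMSEQ summable_add s\<alpha> s\<beta>)
  have H1: "suminf (FF b d (Suc k)) = suminf \<alpha> + suminf \<beta>"
  proof -
    have "suminf (FF b d (Suc k)) = suminf (\<lambda>m. \<alpha> m + \<beta> m)"
      using LIMSEQ_unique[OF L1] L2 by (simp add: part)
    also have "\<dots> = suminf \<alpha> + suminf \<beta>" by (rule suminf_add[symmetric]) (use s\<alpha> s\<beta> in auto)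
    finally show ?thesis .
  qed
  have E\<alpha>: "(\<Sum>m. (real b - 1) / real b * FF b d (Suc k) m) = (real b - 1) / real b * suminf (FF b d (Suc k))"
    by (rule suminf_mult[OF sF1])
  have E\<beta>: "(\<Sum>m. FF b d k m / real b) = suminf (FF b d k) / real b"
    by (rule suminf_divide[OF sF0])
  have main: "suminf \<alpha> + suminf \<beta> < (real b - 1) / real b * suminf (FF b d (Suc k)) + suminf (FF b d k) / real b"
  proof (cases "d = 0")
    case True
    obtain m0 where m0: "m0 \<ge> 1" "digit_count b d m0 = Suc k" using dc_exists[OF b2 db, of "Suc k"] by auto
    have "\<alpha> m0 < (real b - 1) / real b * FF b d (Suc k) m0"
    proof -
      have "\<alpha> m0 = (\<Sum>j<b. if j = d then 0 else 1 / real (b*m0+j))" using m0 by (simp add: \<alpha>_def)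
      also have "\<dots> < (\<Sum>j<b. if j = d then 0 else 1 / (real b * real m0))"
      proof (rule sum_strict_mono_ex1)
        show "\<forall>x\<in>{..<b}. (if x = d then 0 else 1 / real (b*m0+x)) \<le> (if x = d then 0 else 1 / (real b * real m0))"
          using inv_le m0 by auto
        show "\<exists>a\<in>{..<b}. (if a = d then 0 else 1 / real (b*m0+a)) < (if a = d then 0 else 1 / (real b * real m0))"
          using inv_less[of m0 1] m0 b2 True by (intro bexI[of _ 1]) auto
      qed simp
      also have "\<dots> = (real b - 1) * (1 / (real b * real m0))" by (rule sum_hole)
      also have "\<dots> = (real b - 1) / real b * FF b d (Suc k) m0" using m0 by (simp add: FF_def)
      finally show ?thesis .
    qed
    hence "suminf \<alpha> < (\<Sum>m. (real b - 1) / real b * FF b d (Suc k) m)"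
      by (intro suminf_strict_less[OF s\<alpha> s\<alpha>' \<alpha>le])
    moreover have "suminf \<beta> \<le> (\<Sum>m. FF b d k m / real b)" by (intro suminf_le \<beta>le s\<beta> s\<beta>')
    ultimately show ?thesis using E\<alpha> E\<beta> by linarith
  next
    case False
    hence k1: "k \<ge> 1" using k by auto
    obtain m0 where m0: "m0 \<ge> 1" "digit_count b d m0 = k" using dc_exists[OF b2 db k1] by auto
    have "\<beta> m0 < FF b d k m0 / real b"
      using inv_less[of m0 d] m0 False by (simp add: \<beta>_def FF_def mult.commute)
    hence "suminf \<beta> < (\<Sum>m. FF b d k m / real b)"
      by (intro suminf_strict_less[OF s\<beta> s\<beta>' \<beta>le])
    moreover have "suminf \<alpha> \<le> (\<Sum>m. (real b - 1) / real b * FF b d (Suc k) m)" by (intro suminf_le \<alpha>le s\<alpha> s\<alpha>')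
    ultimately show ?thesis using E\<alpha> E\<beta> by linarith
  qed
  define X where "X = suminf (FF b d (Suc k))"
  define Y where "Y = suminf (FF b d k)"
  have "X < (real b - 1) / real b * X + Y / real b" using main H1 by (simp add: X_def Y_def)
  also have "(real b - 1) / real b * X + Y / real b = X - (X - Y) / real b" using bpos by (simp add: field_simps)
  finally have "(X - Y) / real b < 0" by simp
  hence "X - Y < 0" using bpos by (simp add: divide_less_0_iff)
  thus ?thesis by (simp add: X_def Y_def)
qed

lemma conv: "(\<lambda>n. 1 / real n) summable_on {n. n \<ge> 1 \<and> digit_count b d n = k} \<and> irwin_sum b d k = suminf (FF b d k)"
proof -
  have nrm: "(\<lambda>n. norm (FF b d k n)) = FF b d k" by (rule ext) (simp add: FF_nonneg[OF b2 db])
  have nrm2: "(\<lambda>n. \<bar>FF b d k n\<bar>) = FF b d k" by (rule ext) (simp add: FF_nonneg[OF b2 db])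
  have hs: "(FF b d k has_sum suminf (FF b d k)) UNIV"
    by (rule norm_summable_imp_has_sum) (simp_all add: nrm nrm2 FF_summable[OF b2 db] summable_sums)
  have "((\<lambda>n. 1 / real n) has_sum suminf (FF b d k)) {n. n \<ge> 1 \<and> digit_count b d n = k}"
    using hs by (subst has_sum_cong_neutral[where g = "FF b d k" and T = UNIV]) (auto simp: FF_def)
  thus ?thesis unfolding irwin_sum_def by (auto simp: summable_on_def intro: infsumI)
qed

end

theorem mainTheorem3:
  fixes b d :: nat
  assumes "b \<ge> 2" and "d < b"
  shows "(\<forall>k. (\<lambda>n. 1 / real n) summable_on {n. n \<ge> 1 \<and> digit_count b d n = k})
    \<and> (d \<noteq> 0 \<longrightarrow> (\<forall>k\<ge>1. irwin_sum b d (Suc k) < irwin_sum b d k))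
    \<and> (d = 0 \<longrightarrow> (\<forall>k. irwin_sum b d (Suc k) < irwin_sum b d k))
    \<and> (\<lambda>k. irwin_sum b d k) \<longlonglongrightarrow> real b * ln (real b)"
proof -
  have I: "irwin_sum b d k = suminf (FF b d k)" for k using conv[OF assms] by auto
  have "(\<lambda>k. irwin_sum b d k) = (\<lambda>k. suminf (FF b d k))" by (rule ext) (rule I)
  thus ?thesis using conv[OF assms] H_mono[OF assms] H_limit[OF assms] I by auto
qed


end
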